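(* In the Euclidean plane with coordinates $(x,y)$, $r^2=x^2+y^2$, let $V=\frac{M(y/r^2)}{r^4}$ where $M$ is an arbitrary smooth function. Then $V$ satisfies $\frac{x^2-y^2}{2}V_{,x}+xyV_{,y}+2xV=0$, and for the system $\ddot x=-V_{,x}$, $\ddot y=-V_{,y}$ restricted to zero energy $\dot x^2+\dot y^2+2V=0$, the quantity $$I=\frac{x^2-y^2}{2}\dot x+xy\dot y$$ is a first integral. Moreover, every zero-energy solution with $I=0$ (and $r\neq0$) lies on a circle $r=c_1\cos\theta$, i.e. $(x-\tfrac{c_1}{2})^2+y^2=\tfrac{c_1^2}{4}$ for some constant $c_1\ne0$, and along it $\theta(t)$ satisfies $t-t_0=c_1^3\int\frac{\cos^2\theta\,d\theta}{\sqrt{-2M(\tan\theta/c_1)}}$.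
   Context: Polar coordinates $x=r\cos\theta$, $y=r\sin\theta$. A first integral of the constrained system is a function whose time derivative vanishes along every solution satisfying the zero-energy constraint. *)

theory Defs
  imports "HOL-Analysis.Analysis"
begin

definition smooth_fun :: "(real \<Rightarrow> real) \<Rightarrow> bool" where
  "smooth_fun f \<longleftrightarrow> (\<forall>n x. ((deriv ^^ n) f) differentiable (at x))"

definition Vpot :: "(real \<Rightarrow> real) \<Rightarrow> real \<Rightarrow> real \<Rightarrow> real" where
  "Vpot M x y = M (y / (x\<^sup>2 + y\<^sup>2)) / (x\<^sup>2 + y\<^sup>2)\<^sup>2"

definition Vx :: "(real \<Rightarrow> real) \<Rightarrow> real \<Rightarrow> real \<Rightarrow> real" where
  "Vx M x y = deriv (\<lambda>s. Vpot M s y) x"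

definition Vy :: "(real \<Rightarrow> real) \<Rightarrow> real \<Rightarrow> real \<Rightarrow> real" where
  "Vy M x y = deriv (\<lambda>s. Vpot M x s) y"

definition first_int :: "real \<Rightarrow> real \<Rightarrow> real \<Rightarrow> real \<Rightarrow> real" where
  "first_int x y xd yd = (x\<^sup>2 - y\<^sup>2) / 2 * xd + x * y * yd"

definition zero_energy_solution ::
  "(real \<Rightarrow> real) \<Rightarrow> real set \<Rightarrow> (real \<Rightarrow> real) \<Rightarrow> (real \<Rightarrow> real)
     \<Rightarrow> (real \<Rightarrow> real) \<Rightarrow> (real \<Rightarrow> real) \<Rightarrow> bool" where
  "zero_energy_solution M J x y xd yd \<longleftrightarrow>
     (\<forall>t\<in>J. (x t, y t) \<noteq> (0, 0)
        \<and> (x has_real_derivative xd t) (at t)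
        \<and> (y has_real_derivative yd t) (at t)
        \<and> (xd has_real_derivative - Vx M (x t) (y t)) (at t)
        \<and> (yd has_real_derivative - Vy M (x t) (y t)) (at t)
        \<and> (xd t)\<^sup>2 + (yd t)\<^sup>2 + 2 * Vpot M (x t) (y t) = 0)"

end

theory Submission
  imports Defs
begin

lemma alg_dx: "(R::real) \<noteq> 0 \<Longrightarrow>
  (Mp * (-2*a*b/R\<^sup>2) * R^2 - Mu * (of_nat 2 * (2*a * R^(2 - Suc 0)))) / (R^2 * R^2)
   = -2*a*b*Mp/R^4 - 4*a*Mu/R^3"
  by (simp add: field_simps power2_eq_square power3_eq_cube power4_eq_xxxx)

lemma alg_dy: "(R::real) \<noteq> 0 \<Longrightarrow>
  (Mp * ((a\<^sup>2-b\<^sup>2)/R\<^sup>2) * R^2 - Mu * (of_nat 2 * (2*b * R^(2 - Suc 0)))) / (R^2 * R^2)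
   = Mp*(a\<^sup>2-b\<^sup>2)/R^4 - 4*b*Mu/R^3"
  by (simp add: field_simps power2_eq_square power3_eq_cube power4_eq_xxxx)

lemma Vpot_dx:
  assumes hM: "\<And>z. (M has_real_derivative M' z) (at z)" and ab: "(a,b) \<noteq> (0,0)"
  shows "((\<lambda>s. Vpot M s b) has_real_derivative
     (-2*a*b*M' (b/(a\<^sup>2+b\<^sup>2))/(a\<^sup>2+b\<^sup>2)^4 - 4*a*M(b/(a\<^sup>2+b\<^sup>2))/(a\<^sup>2+b\<^sup>2)^3)) (at a)"
proof -
  have R: "a\<^sup>2+b\<^sup>2 \<noteq> 0" using ab by (simp add: sum_power2_eq_zero_iff)
  have g: "((\<lambda>s. b/(s\<^sup>2+b\<^sup>2)) has_real_derivative (-2*a*b/(a\<^sup>2+b\<^sup>2)^2)) (at a)"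
    apply (rule derivative_eq_intros refl)+
    using R by (auto simp add: field_simps power2_eq_square)
  have m: "((\<lambda>s. M (b/(s\<^sup>2+b\<^sup>2))) has_real_derivative M' (b/(a\<^sup>2+b\<^sup>2)) * (-2*a*b/(a\<^sup>2+b\<^sup>2)^2)) (at a)"
    using DERIV_chain2[OF hM g] .
  have dR: "((\<lambda>s. s\<^sup>2+b\<^sup>2) has_real_derivative 2*a) (at a)"
    by (rule derivative_eq_intros refl)+ simp
  have "((\<lambda>s. M (b/(s\<^sup>2+b\<^sup>2)) / (s\<^sup>2+b\<^sup>2)^2) has_real_derivative
     (M' (b/(a\<^sup>2+b\<^sup>2)) * (-2*a*b/(a\<^sup>2+b\<^sup>2)^2) * (a\<^sup>2+b\<^sup>2)^2 - M (b/(a\<^sup>2+b\<^sup>2)) * (of_nat 2 * (2*a * (a\<^sup>2+b\<^sup>2)^(2 - Suc 0)))) / ((a\<^sup>2+b\<^sup>2)^2 * (a\<^sup>2+b\<^sup>2)^2)) (at a)"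
    by (rule DERIV_divide[OF m DERIV_power[OF dR]]) (use R in simp)
  then show ?thesis unfolding Vpot_def using alg_dx[OF R] by simp
qed

lemma Vpot_dy:
  assumes hM: "\<And>z. (M has_real_derivative M' z) (at z)" and ab: "(a,b) \<noteq> (0,0)"
  shows "((\<lambda>s. Vpot M a s) has_real_derivative
     (M' (b/(a\<^sup>2+b\<^sup>2))*(a\<^sup>2-b\<^sup>2)/(a\<^sup>2+b\<^sup>2)^4 - 4*b*M(b/(a\<^sup>2+b\<^sup>2))/(a\<^sup>2+b\<^sup>2)^3)) (at b)"
proof -
  have R: "a\<^sup>2+b\<^sup>2 \<noteq> 0" using ab by (simp add: sum_power2_eq_zero_iff)
  have g: "((\<lambda>s. s/(a\<^sup>2+s\<^sup>2)) has_real_derivative ((a\<^sup>2-b\<^sup>2)/(a\<^sup>2+b\<^sup>2)^2)) (at b)"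
    apply (rule derivative_eq_intros refl)+
    using R by (auto simp add: field_simps power2_eq_square)
  have m: "((\<lambda>s. M (s/(a\<^sup>2+s\<^sup>2))) has_real_derivative M' (b/(a\<^sup>2+b\<^sup>2)) * ((a\<^sup>2-b\<^sup>2)/(a\<^sup>2+b\<^sup>2)^2)) (at b)"
    using DERIV_chain2[OF hM g] .
  have dR: "((\<lambda>s. a\<^sup>2+s\<^sup>2) has_real_derivative 2*b) (at b)"
    by (rule derivative_eq_intros refl)+ simp
  have "((\<lambda>s. M (s/(a\<^sup>2+s\<^sup>2)) / (a\<^sup>2+s\<^sup>2)^2) has_real_derivative
     (M' (b/(a\<^sup>2+b\<^sup>2)) * ((a\<^sup>2-b\<^sup>2)/(a\<^sup>2+b\<^sup>2)^2) * (a\<^sup>2+b\<^sup>2)^2 - M (b/(a\<^sup>2+b\<^sup>2)) * (of_nat 2 * (2*b * (a\<^sup>2+b\<^sup>2)^(2 - Suc 0)))) / ((a\<^sup>2+b\<^sup>2)^2 * (a\<^sup>2+b\<^sup>2)^2)) (at b)"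
    by (rule DERIV_divide[OF m DERIV_power[OF dR]]) (use R in simp)
  then show ?thesis unfolding Vpot_def using alg_dy[OF R] by simp
qed

lemma identity_V: "(a::real,b::real) \<noteq> (0,0) \<Longrightarrow>
  (a\<^sup>2 - b\<^sup>2) / 2 * (-2*a*b*Mp/(a\<^sup>2+b\<^sup>2)^4 - 4*a*Mu/(a\<^sup>2+b\<^sup>2)^3)
  + a * b * (Mp*(a\<^sup>2-b\<^sup>2)/(a\<^sup>2+b\<^sup>2)^4 - 4*b*Mu/(a\<^sup>2+b\<^sup>2)^3)
  + 2 * a * (Mu / (a\<^sup>2+b\<^sup>2)\<^sup>2) = 0"
proof -
  assume ab: "(a,b) \<noteq> (0,0)"
  have R: "a\<^sup>2+b\<^sup>2 \<noteq> 0" using ab by (simp add: sum_power2_eq_zero_iff)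
  define R where "R = a\<^sup>2+b\<^sup>2"
  have R': "R \<noteq> 0" using R R_def by simp
  have e: "(a\<^sup>2 - b\<^sup>2) / 2 * (-2*a*b*Mp/R^4 - 4*a*Mu/R^3)
  + a * b * (Mp*(a\<^sup>2-b\<^sup>2)/R^4 - 4*b*Mu/R^3) + 2 * a * (Mu / R\<^sup>2) = 2*a*Mu*(R - (a\<^sup>2+b\<^sup>2))/R^3"
    using R' by (simp add: field_simps power2_eq_square power3_eq_cube power4_eq_xxxx)
  show ?thesis using e unfolding R_def by simp
qed

lemma part1:
  assumes hM: "\<And>z. (M has_real_derivative M' z) (at z)" and ab: "(a,b) \<noteq> (0,0)"
  shows "\<exists>Va Vb. ((\<lambda>s. Vpot M s b) has_real_derivative Va) (at a)
               \<and> ((\<lambda>s. Vpot M a s) has_real_derivative Vb) (at b)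
               \<and> (a\<^sup>2 - b\<^sup>2) / 2 * Va + a * b * Vb + 2 * a * Vpot M a b = 0"
  using Vpot_dx[OF hM ab] Vpot_dy[OF hM ab] identity_V[OF ab] unfolding Vpot_def by blast

lemma two_neq0: "(2::real) \<noteq> 0" by simp

lemma alg2: "(u::real)\<^sup>2 + v\<^sup>2 + 2 * W = 0 \<Longrightarrow> (a\<^sup>2 - b\<^sup>2) / 2 * Va + a * b * Vb + 2 * a * W = 0
  \<Longrightarrow> ((real 2 * (u * a ^ (2 - Suc 0)) - real 2 * (v * b ^ (2 - Suc 0))) * 2 - (a\<^sup>2 - b\<^sup>2) * 0) / (2 * 2) * u
    + - Va * ((a\<^sup>2 - b\<^sup>2) / 2) + ((u * b + v * a) * v + - Vb * (a * b)) = 0"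
proof -
  assume e1: "u\<^sup>2 + v\<^sup>2 + 2 * W = 0" and e2: "(a\<^sup>2 - b\<^sup>2) / 2 * Va + a * b * Vb + 2 * a * W = 0"
  have "((real 2 * (u * a ^ (2 - Suc 0)) - real 2 * (v * b ^ (2 - Suc 0))) * 2 - (a\<^sup>2 - b\<^sup>2) * 0) / (2 * 2) * u
    + - Va * ((a\<^sup>2 - b\<^sup>2) / 2) + ((u * b + v * a) * v + - Vb * (a * b))
    = a * (u\<^sup>2 + v\<^sup>2 + 2 * W) - ((a\<^sup>2 - b\<^sup>2) / 2 * Va + a * b * Vb + 2 * a * W)"
    by (simp add: field_simps power2_eq_square)
  also have "\<dots> = 0" by (simp only: e1 e2)
  finally show ?thesis .
qed

lemma part2:
  assumes hM: "\<And>z. (M has_real_derivative M' z) (at z)"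
    and sol: "zero_energy_solution M J x y xd yd" and t: "t \<in> J"
  shows "((\<lambda>s. first_int (x s) (y s) (xd s) (yd s)) has_real_derivative 0) (at t)"
proof -
  from sol t have nz: "(x t, y t) \<noteq> (0,0)"
    and dx: "(x has_real_derivative xd t) (at t)"
    and dy: "(y has_real_derivative yd t) (at t)"
    and dxd: "(xd has_real_derivative - Vx M (x t) (y t)) (at t)"
    and dyd: "(yd has_real_derivative - Vy M (x t) (y t)) (at t)"
    and en: "(xd t)\<^sup>2 + (yd t)\<^sup>2 + 2 * Vpot M (x t) (y t) = 0"
    unfolding zero_energy_solution_def by auto
  obtain Va Vb where A: "((\<lambda>s. Vpot M s (y t)) has_real_derivative Va) (at (x t))"
    and B: "((\<lambda>s. Vpot M (x t) s) has_real_derivative Vb) (at (y t))"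
    and C: "((x t)\<^sup>2 - (y t)\<^sup>2) / 2 * Va + x t * y t * Vb + 2 * x t * Vpot M (x t) (y t) = 0"
    using part1[OF hM nz] by blast
  have "Vx M (x t) (y t) = Va" unfolding Vx_def using A by (rule DERIV_imp_deriv)
  moreover have "Vy M (x t) (y t) = Vb" unfolding Vy_def using B by (rule DERIV_imp_deriv)
  ultimately have dxd': "(xd has_real_derivative - Va) (at t)" and dyd': "(yd has_real_derivative - Vb) (at t)"
    using dxd dyd by auto
  show ?thesis unfolding first_int_def
    apply (rule derivative_eq_intros dx dy dxd' dyd' refl two_neq0)+
    using alg2[OF en C] by simp
qed
lemma Q_deriv:
  assumes dx: "(x has_real_derivative u) (at t)" and dy: "(y has_real_derivative v) (at t)"
    and nx: "x t \<noteq> 0" and I0: "first_int (x t) (y t) u v = 0"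
  shows "((\<lambda>s. ((x s)\<^sup>2 + (y s)\<^sup>2) / x s) has_real_derivative 0) (at t)"
proof -
  have d: "((\<lambda>s. ((x s)\<^sup>2 + (y s)\<^sup>2) / x s) has_real_derivative
     ((of_nat 2 * (u * x t ^ (2 - Suc 0)) + of_nat 2 * (v * y t ^ (2 - Suc 0))) * x t - ((x t)\<^sup>2 + (y t)\<^sup>2) * u) / (x t * x t)) (at t)"
    by (rule DERIV_divide[OF DERIV_add[OF DERIV_power[OF dx] DERIV_power[OF dy]] dx nx])
  have "(of_nat 2 * (u * x t ^ (2 - Suc 0)) + of_nat 2 * (v * y t ^ (2 - Suc 0))) * x t - ((x t)\<^sup>2 + (y t)\<^sup>2) * u
      = 2 * first_int (x t) (y t) u v"
    unfolding first_int_def by (simp add: field_simps power2_eq_square)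
  with d I0 show ?thesis by simp
qed

lemma circle:
  fixes x y xd yd :: "real \<Rightarrow> real"
  assumes J: "open J" "is_interval J"
    and dX: "\<And>t. t\<in>J \<Longrightarrow> (x has_real_derivative xd t) (at t)"
    and dY: "\<And>t. t\<in>J \<Longrightarrow> (y has_real_derivative yd t) (at t)"
    and nz: "\<And>t. t\<in>J \<Longrightarrow> (x t, y t) \<noteq> (0,0)"
    and I0: "\<And>t. t\<in>J \<Longrightarrow> first_int (x t) (y t) (xd t) (yd t) = 0"
    and t1: "t1 \<in> J" "x t1 \<noteq> 0"
  shows "\<exists>c. c \<noteq> 0 \<and> (\<forall>t\<in>J. x t \<noteq> 0 \<and> (x t)\<^sup>2 + (y t)\<^sup>2 = c * x t)"
proof -
  define c where "c = ((x t1)\<^sup>2 + (y t1)\<^sup>2) / x t1"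
  define g where "g t = (x t)\<^sup>2 + (y t)\<^sup>2 - c * x t" for t
  define A where "A = {t\<in>J. g t = 0}"
  have r0: "(x t)\<^sup>2 + (y t)\<^sup>2 \<noteq> 0" if "t \<in> J" for t
    using nz[OF that] by (simp add: sum_power2_eq_zero_iff)
  have gx: "x t \<noteq> 0" if "t \<in> A" for t
    using that r0 unfolding A_def g_def by auto
  have cx: "isCont x t" "isCont y t" if "t \<in> J" for t
    using dX[OF that] dY[OF that] by (auto intro: DERIV_isCont)
  have contg: "continuous_on J g"
    unfolding g_def by (intro continuous_at_imp_continuous_on ballI continuous_intros cx) auto
  have clA: "closedin (top_of_set J) A"
    unfolding A_def by (rule continuous_closedin_preimage_constant[OF contg])
  have opA: "open A"
  proof (rule openI)
    fix t assume tA: "t \<in> A"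
    then have tJ: "t \<in> J" and xt: "x t \<noteq> 0" using gx A_def by auto
    obtain e1 where e1: "e1 > 0" "ball t e1 \<subseteq> J" using J(1) tJ open_contains_ball by blast
    obtain e2 where e2: "e2 > 0" "\<forall>s. dist t s < e2 \<longrightarrow> x s \<noteq> 0"
      using continuous_at_avoid[OF cx(1)[OF tJ] xt] by blast
    define e where "e = min e1 e2"
    have eb: "ball t e \<subseteq> J" "\<And>s. s \<in> ball t e \<Longrightarrow> x s \<noteq> 0"
      using e1 e2 unfolding e_def by (auto simp: dist_commute)
    have "\<exists>k. \<forall>s\<in>ball t e. ((x s)\<^sup>2 + (y s)\<^sup>2) / x s = k"
    proof (rule has_field_derivative_zero_constant)
      fix s assume "s \<in> ball t e"
      then have "s \<in> J" "x s \<noteq> 0" using eb by auto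
      then show "((\<lambda>s. ((x s)\<^sup>2 + (y s)\<^sup>2) / x s) has_field_derivative 0) (at s within ball t e)"
        using Q_deriv[OF dX dY _ I0] by (auto intro: has_field_derivative_at_within)
    qed simp
    then obtain k where k: "\<forall>s\<in>ball t e. ((x s)\<^sup>2 + (y s)\<^sup>2) / x s = k" by blast
    have "((x t)\<^sup>2 + (y t)\<^sup>2) / x t = c" using tA xt unfolding A_def g_def by (auto simp: field_simps)
    moreover have "t \<in> ball t e" using e1 e2 e_def by simp
    ultimately have kc: "k = c" using k by auto
    have "ball t e \<subseteq> A"
    proof
      fix s assume s: "s \<in> ball t e"
      then have "x s \<noteq> 0" "s \<in> J" using eb by auto
      moreover have "((x s)\<^sup>2 + (y s)\<^sup>2) / x s = c" using k kc s by auto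
      ultimately show "s \<in> A" unfolding A_def g_def by (auto simp: field_simps)
    qed
    moreover have "e > 0" using e1 e2 e_def by auto
    ultimately show "\<exists>e>0. ball t e \<subseteq> A" by blast
  qed
  have "A \<subseteq> J" unfolding A_def by auto
  then have "openin (top_of_set J) A" using opA by (rule open_subset)
  moreover have "connected J" using J(2) by (rule is_interval_connected)
  ultimately have "A = {} \<or> A = J" using clA connected_clopen by blast
  moreover have "t1 \<in> A" using t1 unfolding A_def g_def c_def by (auto simp: field_simps)
  ultimately have AJ: "A = J" by auto
  have "c \<noteq> 0" using r0[OF t1(1)] t1(2) unfolding c_def by simp
  moreover have "\<forall>t\<in>J. x t \<noteq> 0 \<and> (x t)\<^sup>2 + (y t)\<^sup>2 = c * x t"
    using AJ gx unfolding A_def g_def by auto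
  ultimately show ?thesis by blast
qed
lemma alg_th: "(a::real) \<noteq> 0 \<Longrightarrow> inverse (1 + (b/a)\<^sup>2) * ((v * a - b * u) / (a * a)) = (a * v - b * u) / (a\<^sup>2 + b\<^sup>2)"
proof -
  assume a: "a \<noteq> 0"
  have R: "a\<^sup>2 + b\<^sup>2 \<noteq> 0" using a by (simp add: sum_power2_eq_zero_iff)
  have "1 + (b/a)\<^sup>2 = (a\<^sup>2+b\<^sup>2)/a\<^sup>2" using a by (simp add: field_simps power2_eq_square)
  then have "inverse (1 + (b/a)\<^sup>2) = a\<^sup>2/(a\<^sup>2+b\<^sup>2)" by simp
  then have "inverse (1 + (b/a)\<^sup>2) * ((v * a - b * u) / (a * a)) = a\<^sup>2/(a\<^sup>2+b\<^sup>2) * ((v * a - b * u) / (a * a))" by simp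
  also have "\<dots> = (v * a - b * u) / (a\<^sup>2+b\<^sup>2)" using a R by (simp add: power2_eq_square)
  finally show ?thesis by (simp add: mult.commute)
qed

lemma alg_q: "(a\<^sup>2 - b\<^sup>2) / 2 * u + a * b * v = 0 \<Longrightarrow> (a * v - b * u)\<^sup>2 = (a::real)\<^sup>2 * (u\<^sup>2 + v\<^sup>2)"
proof -
  assume I: "(a\<^sup>2 - b\<^sup>2) / 2 * u + a * b * v = 0"
  have "(a * v - b * u)\<^sup>2 - a\<^sup>2 * (u\<^sup>2 + v\<^sup>2) = -2 * u * ((a\<^sup>2 - b\<^sup>2) / 2 * u + a * b * v)"
    by (simp add: algebra_simps power2_eq_square)
  then show ?thesis using I by simp
qed

lemma alg_h:
  fixes a b u v c W :: real
  assumes a: "a \<noteq> 0" and c: "c \<noteq> 0" and R: "a\<^sup>2 + b\<^sup>2 = c * a" and W: "W > 0"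
    and I: "(a\<^sup>2 - b\<^sup>2) / 2 * u + a * b * v = 0" and E: "u\<^sup>2 + v\<^sup>2 = W / (a\<^sup>2 + b\<^sup>2)\<^sup>2"
  shows "((a * v - b * u) / (a\<^sup>2 + b\<^sup>2) * ((1 / (1 + (b/a)\<^sup>2)) / sqrt W))\<^sup>2 = 1 / c^6"
proof -
  have q: "(a * v - b * u)\<^sup>2 = a\<^sup>2 * (W / (c*a)\<^sup>2)" using alg_q[OF I] E R by simp
  have f: "1 / (1 + (b/a)\<^sup>2) = a / c"
  proof -
    have "1 + (b/a)\<^sup>2 = (a\<^sup>2+b\<^sup>2)/a\<^sup>2" using a by (simp add: field_simps power2_eq_square)
    also have "\<dots> = c / a" using R a by (simp add: power2_eq_square)
    finally show ?thesis using a c by simp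
  qed
  have sW: "(sqrt W)\<^sup>2 = W" using W by simp
  have "((a * v - b * u) / (a\<^sup>2 + b\<^sup>2) * ((1 / (1 + (b/a)\<^sup>2)) / sqrt W))\<^sup>2
      = (a * v - b * u)\<^sup>2 / (c*a)\<^sup>2 * (a/c)\<^sup>2 / (sqrt W)\<^sup>2"
    unfolding f R by (simp add: power_mult_distrib power_divide)
  also have "\<dots> = a\<^sup>2 * (W / (c*a)\<^sup>2) / (c*a)\<^sup>2 * (a/c)\<^sup>2 / W" unfolding q sW ..
  also have "\<dots> = 1 / c^6" using a c W by (simp add: field_simps power2_eq_square eval_nat_numeral)
  finally show ?thesis .
qed

lemma integral_part:
  fixes x y xd yd M :: "real \<Rightarrow> real" and c :: real
  assumes Mc: "\<And>z. isCont M z" and c: "c \<noteq> 0"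
    and dX: "\<And>t. t\<in>J \<Longrightarrow> (x has_real_derivative xd t) (at t)"
    and dY: "\<And>t. t\<in>J \<Longrightarrow> (y has_real_derivative yd t) (at t)"
    and cXd: "\<And>t. t\<in>J \<Longrightarrow> isCont xd t"
    and cYd: "\<And>t. t\<in>J \<Longrightarrow> isCont yd t"
    and xnz: "\<And>t. t\<in>J \<Longrightarrow> x t \<noteq> 0"
    and circ: "\<And>t. t\<in>J \<Longrightarrow> (x t)\<^sup>2 + (y t)\<^sup>2 = c * x t"
    and I0: "\<And>t. t\<in>J \<Longrightarrow> first_int (x t) (y t) (xd t) (yd t) = 0"
    and en: "\<And>t. t\<in>J \<Longrightarrow> (xd t)\<^sup>2 + (yd t)\<^sup>2 + 2 * Vpot M (x t) (y t) = 0"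
    and KJ: "K \<subseteq> J" and K: "is_interval K"
    and neg: "\<And>s. s\<in>K \<Longrightarrow> M (tan (arctan (y s / x s)) / c) < 0"
  shows "\<exists>\<sigma>\<in>{1, -1}. \<forall>t0\<in>K. \<forall>t\<in>K.
                   t - t0 = \<sigma> * c ^ 3 *
                     interval_lebesgue_integral lborel (ereal (arctan (y t0 / x t0))) (ereal (arctan (y t / x t)))
                       (\<lambda>\<phi>. (cos \<phi>)\<^sup>2 / sqrt (- 2 * M (tan \<phi> / c)))"
proof -
  define th where "th s = arctan (y s / x s)" for s
  define th' where "th' s = (x s * yd s - y s * xd s) / ((x s)\<^sup>2 + (y s)\<^sup>2)" for s
  define f where "f \<phi> = (cos \<phi>)\<^sup>2 / sqrt (- 2 * M (tan \<phi> / c))" for \<phi>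
  define h where "h s = th' s * f (th s)" for s
  have r0: "(x t)\<^sup>2 + (y t)\<^sup>2 \<noteq> 0" if "t \<in> J" for t
    using xnz[OF that] by (simp add: sum_power2_eq_zero_iff)
  have dth: "(th has_real_derivative th' s) (at s)" if s: "s \<in> J" for s
  proof -
    have "(th has_real_derivative inverse (1 + (y s / x s)\<^sup>2) * ((yd s * x s - y s * xd s) / (x s * x s))) (at s)"
      unfolding th_def by (rule DERIV_chain2[OF DERIV_arctan DERIV_divide[OF dY[OF s] dX[OF s] xnz[OF s]]])
    then show ?thesis unfolding th'_def using alg_th[OF xnz[OF s]] by simp
  qed
  have cth': "isCont th' s" if s: "s \<in> J" for s
  proof -
    have "isCont x s" "isCont y s" using dX[OF s] dY[OF s] by (auto intro: DERIV_isCont)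
    then show ?thesis unfolding th'_def using cXd[OF s] cYd[OF s] r0[OF s]
      by (intro continuous_intros) auto
  qed
  have cf: "isCont f (th s)" if s: "s \<in> K" for s
  proof -
    have cs: "cos (th s) \<noteq> 0" unfolding th_def by simp
    have "isCont (\<lambda>\<phi>. tan \<phi> / c) (th s)" using cs c by (intro continuous_intros) auto
    then have "isCont (\<lambda>\<phi>. M (tan \<phi> / c)) (th s)" using Mc by (rule isCont_o2)
    moreover have "sqrt (- 2 * M (tan (th s) / c)) \<noteq> 0" using neg[OF s] unfolding th_def by simp
    ultimately show ?thesis unfolding f_def by (intro continuous_intros) auto
  qed
  have fpos: "f (th s) > 0" if s: "s \<in> K" for s
  proof -
    have "cos (th s) \<noteq> 0" unfolding th_def by simp
    then show ?thesis using neg[OF s] unfolding f_def th_def by simp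
  qed
  have hsq: "(h s)\<^sup>2 = 1 / c^6" if s: "s \<in> K" for s
  proof -
    have sJ: "s \<in> J" using s KJ by auto
    define W where "W = - 2 * M (y s / x s / c)"
    have W: "W > 0" using neg[OF s] unfolding W_def by (simp add: tan_arctan)
    have Ival: "((x s)\<^sup>2 - (y s)\<^sup>2) / 2 * xd s + x s * y s * yd s = 0" using I0[OF sJ] unfolding first_int_def .
    have yR: "y s / ((x s)\<^sup>2 + (y s)\<^sup>2) = y s / x s / c" using circ[OF sJ] by simp
    have E: "(xd s)\<^sup>2 + (yd s)\<^sup>2 = W / ((x s)\<^sup>2 + (y s)\<^sup>2)\<^sup>2"
      using en[OF sJ] unfolding W_def Vpot_def yR by (simp add: field_simps)
    have cos2: "(cos (th s))\<^sup>2 = 1 / (1 + (y s / x s)\<^sup>2)"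
      unfolding th_def cos_arctan by (simp add: power_divide add_pos_nonneg)
    have "h s = (x s * yd s - y s * xd s) / ((x s)\<^sup>2 + (y s)\<^sup>2) * ((1 / (1 + (y s / x s)\<^sup>2)) / sqrt W)"
      unfolding h_def th'_def f_def cos2 W_def by (simp add: th_def tan_arctan)
    then show ?thesis using alg_h[OF xnz[OF sJ] c circ[OF sJ] W Ival E] by simp
  qed
  have hnz: "h s \<noteq> 0" if "s \<in> K" for s using hsq[OF that] c by auto
  have const: "\<exists>\<kappa>. \<kappa>\<^sup>2 = 1 / c^6 \<and> (\<forall>s\<in>K. h s = \<kappa>)"
  proof (cases "K = {}")
    case True
    then show ?thesis by (intro exI[of _ "1 / c^3"]) (simp add: power_divide flip: power_mult)
  next
    case False
    then obtain k0 where k0: "k0 \<in> K" by blast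
    have "h s = h k0" if s: "s \<in> K" for s
    proof (rule ccontr)
      assume ne: "h s \<noteq> h k0"
      have "(h s)\<^sup>2 = (h k0)\<^sup>2" using hsq s k0 by simp
      then have neg2: "h s = - h k0" using ne by (simp add: power2_eq_iff)
      have sg: "th' s * th' k0 < 0"
      proof -
        have "h s * h k0 = - (h k0)\<^sup>2" using neg2 by (simp add: power2_eq_square)
        moreover have "(h k0)\<^sup>2 > 0" using hnz[OF k0] by simp
        ultimately have "h s * h k0 < 0" by linarith
        then have "(th' s * th' k0) * (f (th s) * f (th k0)) < 0" unfolding h_def by (simp add: algebra_simps)
        moreover have "f (th s) * f (th k0) > 0" using fpos[OF s] fpos[OF k0] by simp
        ultimately show ?thesis using fpos[OF s] fpos[OF k0] by (auto simp add: mult_less_0_iff)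
      qed
      obtain l u where lu: "l \<in> K" "u \<in> K" "l \<le> u" "th' l * th' u < 0"
      proof (cases "s \<le> k0")
        case True then show ?thesis using that[of s k0] s k0 sg by blast
      next
        case False then show ?thesis using that[of k0 s] s k0 sg by (simp add: mult.commute)
      qed
      have luK: "z \<in> K" if "l \<le> z" "z \<le> u" for z
        using mem_is_interval_1_I[OF K lu(1) lu(2) that] .
      have contK: "continuous_on {l..u} th'"
      proof (intro continuous_at_imp_continuous_on ballI cth')
        fix z assume "z \<in> {l..u}"
        then have "z \<in> K" using luK by simp
        then show "z \<in> J" using KJ by blast
      qed
      have "\<exists>z. l \<le> z \<and> z \<le> u \<and> th' z = 0"
      proof (cases "th' l \<le> 0")
        case True
        then have "0 \<le> th' u" using lu(4) by (auto simp: mult_less_0_iff)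
        then show ?thesis using IVT'[of th' l 0 u, OF True _ lu(3) contK] by blast
      next
        case False
        then have tu: "th' u \<le> 0" using lu(4) by (auto simp: mult_less_0_iff)
        show ?thesis using IVT2'[of th' u 0 l, OF tu _ lu(3) contK] False by auto
      qed
      then obtain z where z: "l \<le> z" "z \<le> u" "th' z = 0" by blast
      then have "z \<in> K" using luK by blast
      then show False using hnz z(3) unfolding h_def by simp
    qed
    then show ?thesis using hsq[OF k0] by blast
  qed
  then obtain \<kappa> where ksq: "\<kappa>\<^sup>2 = 1 / c^6" and hk: "\<And>s. s\<in>K \<Longrightarrow> h s = \<kappa>" by blast
  have intg: "interval_lebesgue_integral lborel (ereal (th a)) (ereal (th b)) f = \<kappa> * (b - a)"
    if ab: "a \<le> b" "a \<in> K" "b \<in> K" for a b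
  proof -
    have sub: "{a..b} \<subseteq> K"
    proof
      fix z assume "z \<in> {a..b}"
      then show "z \<in> K" using mem_is_interval_1_I[OF K ab(2) ab(3)] by simp
    qed
    have A: "(LBINT s=a..b. th' s *\<^sub>R f (th s)) = (LBINT y=th a..th b. f y)"
    proof (rule interval_integral_substitution_finite[OF ab(1)])
      fix s assume "a \<le> s" "s \<le> b"
      then have "s \<in> J" using sub KJ by fastforce
      then show "(th has_real_derivative th' s) (at s within {a..b})"
        using dth by (auto intro: has_field_derivative_at_within)
    next
      show "continuous_on (th ` {a..b}) f"
        using sub cf by (intro continuous_at_imp_continuous_on) auto
    next
      show "continuous_on {a..b} th'"
        using sub KJ cth' by (intro continuous_at_imp_continuous_on) auto
    qed
    have B: "(LBINT s=a..b. th' s *\<^sub>R f (th s)) = (LBINT s=a..b. \<kappa>)"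
    proof (rule interval_integral_cong)
      fix s assume "s \<in> einterval (min (ereal a) (ereal b)) (max (ereal a) (ereal b))"
      then have "s \<in> K" using sub ab(1) by (auto simp: einterval_def)
      then show "th' s *\<^sub>R f (th s) = \<kappa>" using hk unfolding h_def by simp
    qed
    have "(LBINT y=th a..th b. f y) = (LBINT s=a..b. \<kappa>)" using A B by metis
    also have "\<dots> = \<kappa> * (b - a)" by (rule interval_integral_const(2))
    finally show ?thesis by simp
  qed
  define \<sigma> where "\<sigma> = \<kappa> * c^3"
  have s1: "\<sigma> * c^3 * \<kappa> = 1"
  proof -
    have "\<sigma> * c^3 * \<kappa> = \<kappa>\<^sup>2 * c^6" unfolding \<sigma>_def by (simp add: power2_eq_square eval_nat_numeral)
    then show ?thesis using ksq c by simp
  qed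
  have "\<sigma>\<^sup>2 = 1" unfolding \<sigma>_def using ksq c by (simp add: power_mult_distrib flip: power_mult)
  then have sig: "\<sigma> \<in> {1, -1}" by (auto simp: power2_eq_1_iff)
  show ?thesis
  proof (intro bexI[OF _ sig] ballI)
    fix t0 t assume t0: "t0 \<in> K" and t: "t \<in> K"
    have "interval_lebesgue_integral lborel (ereal (th t0)) (ereal (th t)) f = \<kappa> * (t - t0)"
    proof (cases "t0 \<le> t")
      case True then show ?thesis using intg t0 t by simp
    next
      case False
      then have "interval_lebesgue_integral lborel (ereal (th t)) (ereal (th t0)) f = \<kappa> * (t0 - t)"
        using intg t0 t by simp
      then show ?thesis by (subst interval_integral_endpoints_reverse) (simp add: algebra_simps)
    qed
    then have "\<sigma> * c ^ 3 * interval_lebesgue_integral lborel (ereal (th t0)) (ereal (th t)) f = (\<sigma> * c ^ 3 * \<kappa>) * (t - t0)"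
      by (simp add: mult.assoc)
    then have eq: "\<sigma> * c ^ 3 * interval_lebesgue_integral lborel (ereal (th t0)) (ereal (th t)) f = t - t0"
      unfolding s1 by simp
    show "t - t0 = \<sigma> * c ^ 3 * interval_lebesgue_integral lborel (ereal (arctan (y t0 / x t0))) (ereal (arctan (y t / x t)))
                       (\<lambda>\<phi>. (cos \<phi>)\<^sup>2 / sqrt (- 2 * M (tan \<phi> / c)))"
      using eq unfolding th_def f_def by simp
  qed
qed

theorem mainTheorem7:
  fixes M :: "real \<Rightarrow> real"
  assumes "smooth_fun M"
  shows
    "(\<forall>a b. (a, b) \<noteq> (0, 0) \<longrightarrow>
        (\<exists>Va Vb. ((\<lambda>s. Vpot M s b) has_real_derivative Va) (at a)
               \<and> ((\<lambda>s. Vpot M a s) has_real_derivative Vb) (at b)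
               \<and> (a\<^sup>2 - b\<^sup>2) / 2 * Va + a * b * Vb + 2 * a * Vpot M a b = 0))
   \<and> (\<forall>J x y xd yd. open J \<and> is_interval J \<and> zero_energy_solution M J x y xd yd \<longrightarrow>
        (\<forall>t\<in>J. ((\<lambda>s. first_int (x s) (y s) (xd s) (yd s)) has_real_derivative 0) (at t)))
   \<and> (\<forall>J x y xd yd. open J \<and> is_interval J \<and> zero_energy_solution M J x y xd yd
        \<and> (\<forall>t\<in>J. first_int (x t) (y t) (xd t) (yd t) = 0)
        \<and> (\<exists>t\<in>J. x t \<noteq> 0) \<longrightarrow>
        (\<exists>c1. c1 \<noteq> 0
           \<and> (\<forall>t\<in>J. (x t - c1 / 2)\<^sup>2 + (y t)\<^sup>2 = c1\<^sup>2 / 4)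
           \<and> (let \<theta> = (\<lambda>t. arctan (y t / x t)) in
              \<forall>K. K \<subseteq> J \<and> is_interval K \<and> (\<forall>s\<in>K. M (tan (\<theta> s) / c1) < 0) \<longrightarrow>
                (\<exists>\<sigma>\<in>{1, -1}. \<forall>t0\<in>K. \<forall>t\<in>K.
                   t - t0 = \<sigma> * c1 ^ 3 *
                     interval_lebesgue_integral lborel (ereal (\<theta> t0)) (ereal (\<theta> t))
                       (\<lambda>\<phi>. (cos \<phi>)\<^sup>2 / sqrt (- 2 * M (tan \<phi> / c1)))))))"
proof -
  have "M differentiable (at z)" for z
  proof -
    have "((deriv ^^ 0) M) differentiable (at z)" using assms unfolding smooth_fun_def by blast
    then show ?thesis by simp
  qed
  then have hM: "\<And>z. (M has_real_derivative deriv M z) (at z)"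
    by (simp add: DERIV_deriv_iff_real_differentiable)
  have Mc: "\<And>z. isCont M z" using hM by (rule DERIV_isCont)
  have P3: "\<exists>c1. c1 \<noteq> 0
           \<and> (\<forall>t\<in>J. (x t - c1 / 2)\<^sup>2 + (y t)\<^sup>2 = c1\<^sup>2 / 4)
           \<and> (let \<theta> = (\<lambda>t. arctan (y t / x t)) in
              \<forall>K. K \<subseteq> J \<and> is_interval K \<and> (\<forall>s\<in>K. M (tan (\<theta> s) / c1) < 0) \<longrightarrow>
                (\<exists>\<sigma>\<in>{1, -1}. \<forall>t0\<in>K. \<forall>t\<in>K.
                   t - t0 = \<sigma> * c1 ^ 3 *
                     interval_lebesgue_integral lborel (ereal (\<theta> t0)) (ereal (\<theta> t))
                       (\<lambda>\<phi>. (cos \<phi>)\<^sup>2 / sqrt (- 2 * M (tan \<phi> / c1)))))"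
    if J: "open J" "is_interval J" and sol: "zero_energy_solution M J x y xd yd"
      and I0: "\<forall>t\<in>J. first_int (x t) (y t) (xd t) (yd t) = 0" and ex: "\<exists>t\<in>J. x t \<noteq> 0"
    for J x y xd yd
  proof -
    from sol have nz: "\<And>t. t\<in>J \<Longrightarrow> (x t, y t) \<noteq> (0,0)"
      and dX: "\<And>t. t\<in>J \<Longrightarrow> (x has_real_derivative xd t) (at t)"
      and dY: "\<And>t. t\<in>J \<Longrightarrow> (y has_real_derivative yd t) (at t)"
      and dxd: "\<And>t. t\<in>J \<Longrightarrow> (xd has_real_derivative - Vx M (x t) (y t)) (at t)"
      and dyd: "\<And>t. t\<in>J \<Longrightarrow> (yd has_real_derivative - Vy M (x t) (y t)) (at t)"
      and en: "\<And>t. t\<in>J \<Longrightarrow> (xd t)\<^sup>2 + (yd t)\<^sup>2 + 2 * Vpot M (x t) (y t) = 0"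
      unfolding zero_energy_solution_def by auto
    have cXd: "\<And>t. t\<in>J \<Longrightarrow> isCont xd t" using dxd by (rule DERIV_isCont)
    have cYd: "\<And>t. t\<in>J \<Longrightarrow> isCont yd t" using dyd by (rule DERIV_isCont)
    obtain t1 where t1: "t1 \<in> J" "x t1 \<noteq> 0" using ex by blast
    obtain c where c: "c \<noteq> 0" and cc: "\<forall>t\<in>J. x t \<noteq> 0 \<and> (x t)\<^sup>2 + (y t)\<^sup>2 = c * x t"
      using circle[OF J dX dY nz _ t1] I0 by blast
    have circ: "\<forall>t\<in>J. (x t - c / 2)\<^sup>2 + (y t)\<^sup>2 = c\<^sup>2 / 4"
    proof
      fix t assume "t \<in> J"
      then have e: "(x t)\<^sup>2 + (y t)\<^sup>2 = c * x t" using cc by blast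
      have "(x t - c / 2)\<^sup>2 + (y t)\<^sup>2 = ((x t)\<^sup>2 + (y t)\<^sup>2) - c * x t + c\<^sup>2 / 4"
        by (simp add: power2_eq_square field_simps)
      then show "(x t - c / 2)\<^sup>2 + (y t)\<^sup>2 = c\<^sup>2 / 4" using e by simp
    qed
    have "\<forall>K. K \<subseteq> J \<and> is_interval K \<and> (\<forall>s\<in>K. M (tan (arctan (y s / x s)) / c) < 0) \<longrightarrow>
                (\<exists>\<sigma>\<in>{1, -1}. \<forall>t0\<in>K. \<forall>t\<in>K.
                   t - t0 = \<sigma> * c ^ 3 *
                     interval_lebesgue_integral lborel (ereal (arctan (y t0 / x t0))) (ereal (arctan (y t / x t)))
                       (\<lambda>\<phi>. (cos \<phi>)\<^sup>2 / sqrt (- 2 * M (tan \<phi> / c))))"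
    proof (intro allI impI)
      fix K assume K: "K \<subseteq> J \<and> is_interval K \<and> (\<forall>s\<in>K. M (tan (arctan (y s / x s)) / c) < 0)"
      show "\<exists>\<sigma>\<in>{1, -1}. \<forall>t0\<in>K. \<forall>t\<in>K.
                   t - t0 = \<sigma> * c ^ 3 *
                     interval_lebesgue_integral lborel (ereal (arctan (y t0 / x t0))) (ereal (arctan (y t / x t)))
                       (\<lambda>\<phi>. (cos \<phi>)\<^sup>2 / sqrt (- 2 * M (tan \<phi> / c)))"
        apply (rule integral_part[where J=J and K=K, OF Mc c dX dY cXd cYd])
        using cc I0 en K by blast+
    qed
    then show ?thesis using c circ unfolding Let_def by blast
  qed
  show ?thesis
  proof (intro conjI)
    show "\<forall>a b. (a, b) \<noteq> (0, 0) \<longrightarrow>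
        (\<exists>Va Vb. ((\<lambda>s. Vpot M s b) has_real_derivative Va) (at a)
               \<and> ((\<lambda>s. Vpot M a s) has_real_derivative Vb) (at b)
               \<and> (a\<^sup>2 - b\<^sup>2) / 2 * Va + a * b * Vb + 2 * a * Vpot M a b = 0)"
      using part1[OF hM] by blast
  next
    show "\<forall>J x y xd yd. open J \<and> is_interval J \<and> zero_energy_solution M J x y xd yd \<longrightarrow>
        (\<forall>t\<in>J. ((\<lambda>s. first_int (x s) (y s) (xd s) (yd s)) has_real_derivative 0) (at t))"
      using part2[OF hM] by blast
  next
    show "\<forall>J x y xd yd. open J \<and> is_interval J \<and> zero_energy_solution M J x y xd yd
        \<and> (\<forall>t\<in>J. first_int (x t) (y t) (xd t) (yd t) = 0)
        \<and> (\<exists>t\<in>J. x t \<noteq> 0) \<longrightarrow>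
        (\<exists>c1. c1 \<noteq> 0
           \<and> (\<forall>t\<in>J. (x t - c1 / 2)\<^sup>2 + (y t)\<^sup>2 = c1\<^sup>2 / 4)
           \<and> (let \<theta> = (\<lambda>t. arctan (y t / x t)) in
              \<forall>K. K \<subseteq> J \<and> is_interval K \<and> (\<forall>s\<in>K. M (tan (\<theta> s) / c1) < 0) \<longrightarrow>
                (\<exists>\<sigma>\<in>{1, -1}. \<forall>t0\<in>K. \<forall>t\<in>K.
                   t - t0 = \<sigma> * c1 ^ 3 *
                     interval_lebesgue_integral lborel (ereal (\<theta> t0)) (ereal (\<theta> t))
                       (\<lambda>\<phi>. (cos \<phi>)\<^sup>2 / sqrt (- 2 * M (tan \<phi> / c1))))))"
    proof (intro allI impI)
      fix J x y xd yd
      assume H: "open J \<and> is_interval J \<and> zero_energy_solution M J x y xd yd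
        \<and> (\<forall>t\<in>J. first_int (x t) (y t) (xd t) (yd t) = 0) \<and> (\<exists>t\<in>J. x t \<noteq> 0)"
      show "\<exists>c1. c1 \<noteq> 0
           \<and> (\<forall>t\<in>J. (x t - c1 / 2)\<^sup>2 + (y t)\<^sup>2 = c1\<^sup>2 / 4)
           \<and> (let \<theta> = (\<lambda>t. arctan (y t / x t)) in
              \<forall>K. K \<subseteq> J \<and> is_interval K \<and> (\<forall>s\<in>K. M (tan (\<theta> s) / c1) < 0) \<longrightarrow>
                (\<exists>\<sigma>\<in>{1, -1}. \<forall>t0\<in>K. \<forall>t\<in>K.
                   t - t0 = \<sigma> * c1 ^ 3 *
                     interval_lebesgue_integral lborel (ereal (\<theta> t0)) (ereal (\<theta> t))
                       (\<lambda>\<phi>. (cos \<phi>)\<^sup>2 / sqrt (- 2 * M (tan \<phi> / c1)))))"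
        using P3[of J x y xd yd] H by blast
    qed
  qed
qed
end
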